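(* Let $f\colon\mathbb{Z}_p^r\to\mathbb{Z}_p$ be a continuous function. Suppose that for every $z\in\mathbb{Z}_p$ there exist $\overline{x},\overline{y}\in\mathbb{Z}_p^r$ with $f(\overline{y})\neq 0$ and $f(\overline{x})/f(\overline{y})=z$. Then $R(f)$ is dense in $\mathbb{Q}_p$.
   Context: For a function $f$ on $\mathbb{Z}_p^r$, $R(f)=\{f(\overline{x})/f(\overline{y}) : \overline{x},\overline{y}\in\mathbb{Z}^r,\ f(\overline{y})\neq 0\}$; density is in the $p$-adic topology. *)

theory Defs
  imports Complex_Main "HOL-Computational_Algebra.Primes"
begin

text \<open>p-adic integers, realised as the inverse limit of the rings Z/p^n Z:
  a p-adic integer is a coherent sequence of residues a n in [0, p^n) with
  a (n+1) mod p^n = a n.\<close>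

type_synonym padic = "nat \<Rightarrow> int"

definition Zp :: "int \<Rightarrow> padic set" where
  "Zp p = {a. (\<forall>n. 0 \<le> a n \<and> a n < p ^ n) \<and> (\<forall>n. a (Suc n) mod p ^ n = a n)}"

definition padic_zero :: "padic" where
  "padic_zero = (\<lambda>n. 0)"

definition padic_of_int :: "int \<Rightarrow> int \<Rightarrow> padic" where
  "padic_of_int p k = (\<lambda>n. k mod p ^ n)"

definition padic_add :: "int \<Rightarrow> padic \<Rightarrow> padic \<Rightarrow> padic" where
  "padic_add p a b = (\<lambda>n. (a n + b n) mod p ^ n)"

definition padic_sub :: "int \<Rightarrow> padic \<Rightarrow> padic \<Rightarrow> padic" where
  "padic_sub p a b = (\<lambda>n. (a n - b n) mod p ^ n)"

definition padic_mult :: "int \<Rightarrow> padic \<Rightarrow> padic \<Rightarrow> padic" where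
  "padic_mult p a b = (\<lambda>n. (a n * b n) mod p ^ n)"

definition padic_val :: "padic \<Rightarrow> nat" where
  "padic_val a = (LEAST n. a (Suc n) \<noteq> 0)"

definition padic_norm :: "int \<Rightarrow> padic \<Rightarrow> real" where
  "padic_norm p a = (if a = padic_zero then 0 else real_of_int p powr (- real (padic_val a)))"

definition Zp_pow :: "int \<Rightarrow> nat \<Rightarrow> padic list set" where
  "Zp_pow p r = {xs. length xs = r \<and> set xs \<subseteq> Zp p}"

definition int_point :: "int \<Rightarrow> int list \<Rightarrow> padic list" where
  "int_point p xs = map (padic_of_int p) xs"

definition padic_continuous :: "int \<Rightarrow> nat \<Rightarrow> (padic list \<Rightarrow> padic) \<Rightarrow> bool" where
  "padic_continuous p r f \<longleftrightarrow>
     (\<forall>x \<in> Zp_pow p r. \<forall>e > 0. \<exists>d > 0. \<forall>y \<in> Zp_pow p r.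
        (\<forall>i < r. padic_norm p (padic_sub p (y ! i) (x ! i)) < d) \<longrightarrow>
        padic_norm p (padic_sub p (f y) (f x)) < e)"

text \<open>Q_p is the fraction field of Z_p: an element is a fraction a/b with a, b in Z_p, b \<noteq> 0.
  Two fractions are equal iff a*d = c*b, and |a/b - c/d|_p = |a d - c b|_p / (|b|_p |d|_p).\<close>

definition Qp_frac :: "int \<Rightarrow> (padic \<times> padic) set" where
  "Qp_frac p = {(a, b). a \<in> Zp p \<and> b \<in> Zp p \<and> b \<noteq> padic_zero}"

definition frac_eq :: "int \<Rightarrow> padic \<times> padic \<Rightarrow> padic \<times> padic \<Rightarrow> bool" where
  "frac_eq p q s \<longleftrightarrow> padic_mult p (fst q) (snd s) = padic_mult p (fst s) (snd q)"

definition frac_dist :: "int \<Rightarrow> padic \<times> padic \<Rightarrow> padic \<times> padic \<Rightarrow> real" where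
  "frac_dist p q s =
     padic_norm p (padic_sub p (padic_mult p (fst q) (snd s)) (padic_mult p (fst s) (snd q)))
     / (padic_norm p (snd q) * padic_norm p (snd s))"

definition R_set :: "int \<Rightarrow> nat \<Rightarrow> (padic list \<Rightarrow> padic) \<Rightarrow> (padic \<times> padic) set" where
  "R_set p r f = {(f (int_point p xs), f (int_point p ys)) | xs ys.
                   length xs = r \<and> length ys = r \<and> f (int_point p ys) \<noteq> padic_zero}"

definition dense_in_Qp :: "int \<Rightarrow> (padic \<times> padic) set \<Rightarrow> bool" where
  "dense_in_Qp p S \<longleftrightarrow> (\<forall>q \<in> Qp_frac p. \<forall>e > 0. \<exists>s \<in> S. frac_dist p s q < e)"

end

theory Submission
  imports Defs "HOL-Number_Theory.Cong"
begin

lemma Zp_range: "a \<in> Zp p \<Longrightarrow> 0 \<le> a n \<and> a n < p ^ n"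
  by (simp add: Zp_def)

lemma Zp_coh1: "a \<in> Zp p \<Longrightarrow> a (Suc n) mod p ^ n = a n"
  by (simp add: Zp_def)

lemma Zp_coh:
  assumes "a \<in> Zp p" "n \<le> m"
  shows "a m mod p ^ n = a n"
  using assms(2)
proof (induction m rule: dec_induct)
  case base
  then show ?case using Zp_range[OF assms(1), of n] by simp
next
  case (step m)
  have "p ^ n dvd p ^ m" using step(1) by (simp add: le_imp_power_dvd)
  then have "a (Suc m) mod p ^ n = (a (Suc m) mod p ^ m) mod p ^ n"
    by (simp add: mod_mod_cancel)
  also have "\<dots> = a n" using Zp_coh1[OF assms(1)] step by simp
  finally show ?case .
qed

lemma Zp_0: "a \<in> Zp p \<Longrightarrow> a 0 = 0"
  using Zp_range[of a p 0] by simp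

lemma of_int_Zp:
  assumes "p > 1" shows "padic_of_int p k \<in> Zp p"
proof -
  have "\<And>n. (k mod p ^ Suc n) mod p ^ n = k mod p ^ n"
    by (simp add: mod_mod_cancel)
  then show ?thesis using assms by (simp add: Zp_def padic_of_int_def)
qed

lemma eq_of_mod0:
  fixes a b m :: int
  assumes "0 \<le> a" "a < m" "0 \<le> b" "b < m" "(a - b) mod m = 0"
  shows "a = b"
proof -
  have "m dvd a - b" using assms(5) by (simp add: mod_eq_0_iff_dvd)
  then obtain k where k: "a - b = m * k" by blast
  have "k = 0"
  proof (rule ccontr)
    assume "k \<noteq> 0"
    then have "\<bar>m * k\<bar> \<ge> m" using assms by (simp add: abs_mult)
    then show False using k assms by linarith
  qed
  then show ?thesis using k by simp
qed

context
  fixes p :: int and c :: padic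
  assumes cZ: "c \<in> Zp p" and cnz: "c \<noteq> padic_zero"
begin

lemma val_ex: "\<exists>m. c (Suc m) \<noteq> 0"
proof (rule ccontr)
  assume "\<not> ?thesis"
  then have "\<forall>n. c n = 0" using Zp_0[OF cZ] by (metis not0_implies_Suc)
  then show False using cnz by (auto simp: padic_zero_def)
qed

lemma val_Suc: "c (Suc (padic_val c)) \<noteq> 0"
  unfolding padic_val_def using val_ex by (rule LeastI_ex)

lemma val_below: "k \<le> padic_val c \<Longrightarrow> c k = 0"
proof (cases k)
  case 0 then show ?thesis using Zp_0[OF cZ] by simp
next
  case (Suc m)
  assume "k \<le> padic_val c"
  then have "m < padic_val c" using Suc by simp
  then show ?thesis using Suc not_less_Least unfolding padic_val_def by blast
qed

lemma val_dvd: "padic_val c \<le> n \<Longrightarrow> p ^ padic_val c dvd c n"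
  using Zp_coh[OF cZ, of "padic_val c" n] val_below[of "padic_val c"]
  by (simp add: mod_eq_0_iff_dvd)

lemma val_ndvd: "padic_val c < n \<Longrightarrow> \<not> p ^ Suc (padic_val c) dvd c n"
  using Zp_coh[OF cZ, of "Suc (padic_val c)" n] val_Suc
  by (simp add: mod_eq_0_iff_dvd[symmetric])

lemma norm_val: "padic_norm p c = real_of_int p powr (- real (padic_val c))"
  using cnz by (simp add: padic_norm_def)

end

lemma val_eqI:
  assumes "\<And>m. m < t \<Longrightarrow> c (Suc m) = 0" "c (Suc t) \<noteq> 0"
  shows "padic_val c = t"
  unfolding padic_val_def
  by (rule Least_equality) (use assms in \<open>auto simp: not_less[symmetric]\<close>)

lemma norm_le:
  assumes "p > 1" "\<And>k. k \<le> N \<Longrightarrow> c k = 0"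
  shows "padic_norm p c \<le> real_of_int p powr (- real N)"
proof (cases "c = padic_zero")
  case True then show ?thesis by (simp add: padic_norm_def)
next
  case False
  have ex: "\<exists>m. c (Suc m) \<noteq> 0"
  proof (rule ccontr)
    assume "\<not> ?thesis"
    then have "\<forall>n. c n = 0" using assms(2)[of 0] by (metis le0 not0_implies_Suc)
    then show False using False by (auto simp: padic_zero_def)
  qed
  have "c (Suc (padic_val c)) \<noteq> 0"
    unfolding padic_val_def using ex by (rule LeastI_ex)
  then have "N \<le> padic_val c" using assms(2)[of "Suc (padic_val c)"] by (cases "N \<le> padic_val c") auto
  then show ?thesis using False assms(1) by (simp add: padic_norm_def)
qed

lemma norm_lt_zero:
  assumes "p > 1" "c 0 = 0" "padic_norm p c < real_of_int p powr (- real L)"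
  shows "c L = 0"
proof (cases "c = padic_zero")
  case True then show ?thesis by (simp add: padic_zero_def)
next
  case False
  show ?thesis
  proof (cases L)
    case 0 then show ?thesis using assms by simp
  next
    case (Suc m)
    show ?thesis
    proof (rule ccontr)
      assume ne: "c L \<noteq> 0"
      then have "padic_val c \<le> m" unfolding padic_val_def using Suc by (metis Least_le)
      then have "real_of_int p powr (- real L) \<le> real_of_int p powr (- real (padic_val c))"
        using assms(1) Suc by (intro powr_mono) auto
      then show False using assms(3) False by (simp add: padic_norm_def)
    qed
  qed
qed

lemma Zp_cong: "a \<in> Zp p \<Longrightarrow> n \<le> m \<Longrightarrow> [a m = a n] (mod p ^ n)"
  unfolding cong_def using Zp_coh[of a p n m] Zp_coh[of a p n n] by simp

lemma div_exists:
  fixes p :: int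
  assumes pr: "prime p" and aZ: "a \<in> Zp p" and bZ: "b \<in> Zp p" and bnz: "b \<noteq> padic_zero"
    and aj: "a (padic_val b) = 0"
  shows "\<exists>z \<in> Zp p. \<forall>n. (z n * b n) mod p ^ n = a n"
proof -
  define j where "j = padic_val b"
  have p1: "p > 1" using pr by (simp add: prime_gt_1_int)
  define P where "P n c \<longleftrightarrow> [c * b (n + j) = a (n + j)] (mod p ^ (n + j))" for n c
  have wdef: "\<exists>w. b (n + j) = p ^ j * w \<and> coprime w (p ^ n)" for n
  proof -
    have "p ^ j dvd b (n + j)" unfolding j_def by (rule val_dvd[OF bZ bnz]) simp
    then obtain w where w: "b (n + j) = p ^ j * w" by blast
    have "coprime w (p ^ n)"
    proof (cases n)
      case 0 then show ?thesis by simp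
    next
      case (Suc m)
      have "\<not> p ^ Suc j dvd b (n + j)" unfolding j_def by (rule val_ndvd[OF bZ bnz]) (simp add: Suc j_def)
      then have "\<not> p dvd w" using w p1 by auto
      then have "coprime w p" using pr by (simp add: prime_imp_coprime coprime_commute)
      then show ?thesis by simp
    qed
    then show ?thesis using w by blast
  qed
  have ex: "\<exists>c. P n c" for n
  proof -
    obtain w where w: "b (n + j) = p ^ j * w" "coprime w (p ^ n)" using wdef by blast
    have "a (n + j) mod p ^ j = a j" by (rule Zp_coh[OF aZ]) simp
    then have "p ^ j dvd a (n + j)" using aj by (simp add: j_def mod_eq_0_iff_dvd)
    then obtain a' where a': "a (n + j) = p ^ j * a'" by blast
    obtain x where x: "[w * x = 1] (mod p ^ n)" using cong_solve_coprime_int[OF w(2)] by blast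
    then have "[w * (x * a') = a'] (mod p ^ n)"
      using cong_mult[OF x cong_refl[of a']] by (simp add: ac_simps)
    then have "p ^ n dvd w * (x * a') - a'" by (simp add: cong_iff_dvd_diff)
    then have "p ^ j * p ^ n dvd p ^ j * (w * (x * a') - a')" by (rule mult_dvd_mono[OF dvd_refl])
    then have "p ^ (n + j) dvd (x * a') * b (n + j) - a (n + j)"
      using w a' by (simp add: power_add algebra_simps)
    then show ?thesis unfolding P_def by (auto simp: cong_iff_dvd_diff)
  qed
  have uniq: "P n c \<Longrightarrow> P n c' \<Longrightarrow> [c = c'] (mod p ^ n)" for n c c'
  proof -
    assume h: "P n c" "P n c'"
    obtain w where w: "b (n + j) = p ^ j * w" "coprime w (p ^ n)" using wdef by blast
    have "[c * b (n + j) = c' * b (n + j)] (mod p ^ (n + j))"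
      using h unfolding P_def using cong_sym cong_trans by blast
    then have "p ^ j * p ^ n dvd p ^ j * ((c - c') * w)"
      using w by (simp add: cong_iff_dvd_diff power_add algebra_simps)
    then have "p ^ n dvd (c - c') * w" using p1 by (subst (asm) dvd_mult_cancel_left) auto
    then have "p ^ n dvd c - c'" using w(2) by (metis coprime_commute coprime_dvd_mult_left_iff)
    then show ?thesis by (simp add: cong_iff_dvd_diff)
  qed
  define S where "S n = (SOME c. P n c)" for n
  have PS: "P n (S n)" for n unfolding S_def using ex by (rule someI_ex)
  define z where "z n = S n mod p ^ n" for n
  have red: "P n (S (Suc n))" for n
  proof -
    have "[S (Suc n) * b (Suc n + j) = a (Suc n + j)] (mod p ^ (n + j))"
      using PS[of "Suc n"] unfolding P_def
      by (rule cong_dvd_modulus) (simp add: le_imp_power_dvd)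
    moreover have "[b (Suc n + j) = b (n + j)] (mod p ^ (n + j))" by (rule Zp_cong[OF bZ]) simp
    moreover have "[a (Suc n + j) = a (n + j)] (mod p ^ (n + j))" by (rule Zp_cong[OF aZ]) simp
    ultimately show ?thesis unfolding P_def
      by (meson cong_scalar_left cong_sym cong_trans)
  qed
  have zZ: "z \<in> Zp p"
  proof -
    have "z (Suc n) mod p ^ n = z n" for n
    proof -
      have "z (Suc n) mod p ^ n = S (Suc n) mod p ^ n"
        unfolding z_def by (simp add: mod_mod_cancel)
      also have "\<dots> = S n mod p ^ n" using uniq[OF red PS] by (simp add: cong_def)
      finally show ?thesis by (simp add: z_def)
    qed
    moreover have "0 \<le> z n \<and> z n < p ^ n" for n using p1 by (simp add: z_def)
    ultimately show ?thesis by (simp add: Zp_def)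
  qed
  have "(z n * b n) mod p ^ n = a n" for n
  proof -
    have "[S n * b (n + j) = a (n + j)] (mod p ^ n)"
      using PS[of n] unfolding P_def by (rule cong_dvd_modulus) (simp add: le_imp_power_dvd)
    moreover have "[b (n + j) = b n] (mod p ^ n)" by (rule Zp_cong[OF bZ]) simp
    moreover have "[a (n + j) = a n] (mod p ^ n)" by (rule Zp_cong[OF aZ]) simp
    moreover have "[z n = S n] (mod p ^ n)" by (simp add: z_def cong_def)
    ultimately have "[z n * b n = a n] (mod p ^ n)"
      by (meson cong_mult cong_sym cong_trans)
    then show ?thesis using Zp_coh[OF aZ, of n n] by (simp add: cong_def)
  qed
  then show ?thesis using zZ by blast
qed

lemma domain:
  fixes p :: int
  assumes pr: "prime p" and uZ: "u \<in> Zp p" and wZ: "w \<in> Zp p"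
    and unz: "u \<noteq> padic_zero" and wnz: "w \<noteq> padic_zero"
  shows "padic_mult p u w \<noteq> padic_zero"
proof
  assume h: "padic_mult p u w = padic_zero"
  define i where "i = padic_val u"
  define k where "k = padic_val w"
  define n where "n = Suc (i + k)"
  have p1: "p > 1" using pr by (simp add: prime_gt_1_int)
  obtain u' where u': "u n = p ^ i * u'" using val_dvd[OF uZ unz, of n] by (auto simp: i_def n_def)
  obtain w' where w': "w n = p ^ k * w'" using val_dvd[OF wZ wnz, of n] by (auto simp: k_def n_def)
  have "\<not> p ^ Suc i dvd u n" using val_ndvd[OF uZ unz, of n] by (simp add: i_def n_def)
  then have nu: "\<not> p dvd u'" using u' p1 by auto
  have "\<not> p ^ Suc k dvd w n" using val_ndvd[OF wZ wnz, of n] by (simp add: k_def n_def)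
  then have nw: "\<not> p dvd w'" using w' p1 by auto
  have "\<not> p dvd u' * w'" using nu nw pr by (simp add: prime_dvd_mult_iff)
  then have "\<not> p ^ (i + k) * p dvd p ^ (i + k) * (u' * w')" using p1 by simp
  then have "\<not> p ^ n dvd u n * w n" using u' w' by (simp add: n_def power_add algebra_simps)
  moreover have "(u n * w n) mod p ^ n = 0" using h unfolding padic_mult_def padic_zero_def by meson
  ultimately show False by (simp add: mod_eq_0_iff_dvd)
qed

lemma approx:
  fixes p :: int
  assumes p1: "p > 1" and cont: "padic_continuous p r f"
    and fZ: "\<forall>x \<in> Zp_pow p r. f x \<in> Zp p" and xZ: "x \<in> Zp_pow p r"
  shows "\<exists>X. length X = r \<and> (\<forall>k \<le> L. f (int_point p X) k = f x k)"
proof -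
  have pp: "real_of_int p > 1" using p1 by simp
  obtain d where d: "d > 0" and dH: "\<forall>y \<in> Zp_pow p r.
        (\<forall>i < r. padic_norm p (padic_sub p (y ! i) (x ! i)) < d) \<longrightarrow>
        padic_norm p (padic_sub p (f y) (f x)) < real_of_int p powr (- real L)"
  proof -
    have "real_of_int p powr (- real L) > 0" using p1 by simp
    then show ?thesis using cont xZ that unfolding padic_continuous_def by blast
  qed
  obtain N :: nat where N: "real N > - log (real_of_int p) d" using reals_Archimedean2 by blast
  have Nd: "real_of_int p powr (- real N) < d"
  proof -
    have "real_of_int p powr (- real N) < real_of_int p powr (log (real_of_int p) d)"
      using N pp by (intro powr_less_mono) auto
    then show ?thesis using d pp by simp
  qed
  define X where "X = map (\<lambda>a. a N) x"
  define Y where "Y = int_point p X"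
  have lx: "length x = r" and sx: "set x \<subseteq> Zp p" using xZ by (auto simp: Zp_pow_def)
  have YZ: "Y \<in> Zp_pow p r"
    using lx of_int_Zp[OF p1] by (auto simp: Y_def X_def int_point_def Zp_pow_def)
  have "\<forall>i < r. padic_norm p (padic_sub p (Y ! i) (x ! i)) < d"
  proof (intro allI impI)
    fix i assume i: "i < r"
    then have xi: "x ! i \<in> Zp p" using lx sx by auto
    have Yi: "Y ! i = padic_of_int p ((x ! i) N)" using i lx by (simp add: Y_def X_def int_point_def)
    have "padic_norm p (padic_sub p (Y ! i) (x ! i)) \<le> real_of_int p powr (- real N)"
    proof (rule norm_le[OF p1])
      fix k assume "k \<le> N"
      then show "padic_sub p (Y ! i) (x ! i) k = 0"
        using Zp_coh[OF xi \<open>k \<le> N\<close>] by (simp add: Yi padic_sub_def padic_of_int_def)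
    qed
    then show "padic_norm p (padic_sub p (Y ! i) (x ! i)) < d" using Nd by linarith
  qed
  then have "padic_norm p (padic_sub p (f Y) (f x)) < real_of_int p powr (- real L)"
    using dH YZ by blast
  then have "padic_sub p (f Y) (f x) L = 0"
    by (rule norm_lt_zero[OF p1, rotated]) (simp add: padic_sub_def)
  moreover have fYZ: "f Y \<in> Zp p" and fxZ: "f x \<in> Zp p" using fZ YZ xZ by auto
  ultimately have eqL: "f Y L = f x L"
    using Zp_range[OF fYZ, of L] Zp_range[OF fxZ, of L] eq_of_mod0[of "f Y L" "p ^ L" "f x L"]
    by (simp add: padic_sub_def)
  have "\<forall>k \<le> L. f Y k = f x k"
  proof (intro allI impI)
    fix k assume k: "k \<le> L"
    show "f Y k = f x k" using Zp_coh[OF fYZ k] Zp_coh[OF fxZ k] eqL by simp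
  qed
  moreover have "length X = r" using lx by (simp add: X_def)
  ultimately show ?thesis unfolding Y_def by blast
qed

lemma est:
  fixes p :: int
  assumes p1: "p > 1" and s2nz: "s2 \<noteq> padic_zero" and bnz: "b \<noteq> padic_zero"
    and cg: "\<forall>k \<le> L. [s1 k * b k = a k * s2 k] (mod p ^ k)"
  shows "frac_dist p (s1, s2) (a, b) \<le>
     real_of_int p powr (real (padic_val s2) + real (padic_val b) - real L)"
proof -
  have pp: "real_of_int p > 1" using p1 by simp
  have num: "padic_norm p (padic_sub p (padic_mult p s1 b) (padic_mult p a s2)) \<le> real_of_int p powr (- real L)"
  proof (rule norm_le[OF p1])
    fix k assume "k \<le> L"
    then have "p ^ k dvd s1 k * b k - a k * s2 k" using cg by (simp add: cong_iff_dvd_diff)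
    then show "padic_sub p (padic_mult p s1 b) (padic_mult p a s2) k = 0"
      by (simp add: padic_sub_def padic_mult_def mod_diff_eq mod_eq_0_iff_dvd)
  qed
  have den: "padic_norm p s2 * padic_norm p b =
      real_of_int p powr (- real (padic_val s2)) * real_of_int p powr (- real (padic_val b))"
    using s2nz bnz by (simp add: padic_norm_def)
  have dpos: "padic_norm p s2 * padic_norm p b > 0" using den pp by simp
  have "frac_dist p (s1, s2) (a, b) \<le> real_of_int p powr (- real L) / (padic_norm p s2 * padic_norm p b)"
    unfolding frac_dist_def fst_conv snd_conv using num dpos by (simp add: divide_right_mono)
  also have "\<dots> = real_of_int p powr (real (padic_val s2) + real (padic_val b) - real L)"
    unfolding den using pp by (simp add: powr_add[symmetric] powr_diff[symmetric] algebra_simps)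
  finally show ?thesis .
qed

lemma chooseL:
  fixes p :: int
  assumes p1: "p > 1" and e: "e > 0"
  shows "\<exists>L::nat. t < L \<and> real_of_int p powr (real t + real j - real L) < e"
proof -
  have pp: "real_of_int p > 1" using p1 by simp
  obtain L :: nat where L: "real L > max (real t) (real t + real j - log (real_of_int p) e)"
    using reals_Archimedean2 by blast
  have "real_of_int p powr (real t + real j - real L) < real_of_int p powr (log (real_of_int p) e)"
    using L pp by (intro powr_less_mono) auto
  then show ?thesis using L pp e by auto
qed

lemma finish:
  fixes p :: int
  assumes p1: "p > 1" and uZ: "u \<in> Zp p" and unz: "u \<noteq> padic_zero"
    and L: "padic_val u < L" and UL: "\<forall>k \<le> L. U k = u k"
    and bnz: "b \<noteq> padic_zero"
    and cg: "\<forall>k \<le> L. [s1 k * b k = a k * U k] (mod p ^ k)"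
    and eL: "real_of_int p powr (real (padic_val u) + real (padic_val b) - real L) < e"
  shows "U \<noteq> padic_zero \<and> frac_dist p (s1, U) (a, b) < e"
proof -
  have vU: "padic_val U = padic_val u"
  proof (rule val_eqI)
    fix m assume "m < padic_val u"
    then show "U (Suc m) = 0" using UL L val_below[OF uZ unz, of "Suc m"] by simp
  next
    show "U (Suc (padic_val u)) \<noteq> 0" using UL L val_Suc[OF uZ unz] by simp
  qed
  have Unz: "U \<noteq> padic_zero"
    using UL L val_Suc[OF uZ unz] by (auto simp: padic_zero_def)
  have "frac_dist p (s1, U) (a, b) \<le>
     real_of_int p powr (real (padic_val U) + real (padic_val b) - real L)"
    by (rule est[OF p1 Unz bnz cg])
  then show ?thesis using Unz vU eL by simp
qed

theorem lemma2p6: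
  fixes p :: int and r :: nat and f :: "padic list \<Rightarrow> padic"
  assumes "prime p"
    and "\<forall>x \<in> Zp_pow p r. f x \<in> Zp p"
    and "padic_continuous p r f"
    and "\<forall>z \<in> Zp p. \<exists>x \<in> Zp_pow p r. \<exists>y \<in> Zp_pow p r.
           f y \<noteq> padic_zero \<and> frac_eq p (f x, f y) (z, padic_of_int p 1)"
  shows "dense_in_Qp p (R_set p r f)"
  unfolding dense_in_Qp_def
proof (intro ballI allI impI)
  fix q and e :: real
  assume qQ: "q \<in> Qp_frac p" and e: "e > 0"
  obtain a b where q: "q = (a, b)" by (cases q) simp
  have aZ: "a \<in> Zp p" and bZ: "b \<in> Zp p" and bnz: "b \<noteq> padic_zero"
    using qQ q by (auto simp: Qp_frac_def)
  have pr: "prime p" and fZ: "\<forall>x \<in> Zp_pow p r. f x \<in> Zp p"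
    and cont: "padic_continuous p r f" using assms(1) assms(2) assms(3) by simp_all
  have p1: "p > 1" using pr by (simp add: prime_gt_1_int)
  have hyp: "\<exists>x \<in> Zp_pow p r. \<exists>y \<in> Zp_pow p r. f y \<noteq> padic_zero \<and>
      (\<forall>n. f x n = (z n * f y n) mod p ^ n)" if zZ: "z \<in> Zp p" for z
  proof -
    obtain x y where x: "x \<in> Zp_pow p r" and y: "y \<in> Zp_pow p r" and fy: "f y \<noteq> padic_zero"
      and fe: "frac_eq p (f x, f y) (z, padic_of_int p 1)" using assms(4) zZ by meson
    have fxZ: "f x \<in> Zp p" using fZ x by blast
    have "f x n = (z n * f y n) mod p ^ n" for n
    proof -
      have "padic_mult p (f x) (padic_of_int p 1) = padic_mult p z (f y)"
        using fe by (simp add: frac_eq_def)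
      then have "padic_mult p (f x) (padic_of_int p 1) n = padic_mult p z (f y) n" by simp
      then have "(f x n * (1 mod p ^ n)) mod p ^ n = (z n * f y n) mod p ^ n"
        by (simp add: padic_mult_def padic_of_int_def)
      moreover have "(f x n * (1 mod p ^ n)) mod p ^ n = f x n"
        using Zp_coh[OF fxZ, of n n] by (simp add: mod_mult_right_eq)
      ultimately show ?thesis by simp
    qed
    then show ?thesis using x y fy by blast
  qed
  define j where "j = padic_val b"
  show "\<exists>s \<in> R_set p r f. frac_dist p s q < e"
  proof (cases "a j = 0")
    case True
    obtain z where zZ: "z \<in> Zp p" and zb: "\<forall>n. (z n * b n) mod p ^ n = a n"
      using div_exists[OF pr aZ bZ bnz] True by (auto simp: j_def)
    obtain x y where x: "x \<in> Zp_pow p r" and y: "y \<in> Zp_pow p r" and fy: "f y \<noteq> padic_zero"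
      and fxy: "\<forall>n. f x n = (z n * f y n) mod p ^ n" using hyp[OF zZ] by blast
    have fyZ: "f y \<in> Zp p" using fZ y by blast
    obtain L where L: "padic_val (f y) < L"
      and eL: "real_of_int p powr (real (padic_val (f y)) + real (padic_val b) - real L) < e"
      using chooseL[OF p1 e, of "padic_val (f y)" "padic_val b"] by blast
    obtain X where X: "length X = r" and XL: "\<forall>k \<le> L. f (int_point p X) k = f x k"
      using approx[OF p1 cont fZ x] by blast
    obtain Y where Y: "length Y = r" and YL: "\<forall>k \<le> L. f (int_point p Y) k = f y k"
      using approx[OF p1 cont fZ y] by blast
    have cg: "\<forall>k \<le> L. [f (int_point p X) k * b k = a k * f (int_point p Y) k] (mod p ^ k)"
    proof (intro allI impI)
      fix k assume k: "k \<le> L"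
      have c1: "[f (int_point p X) k * b k = z k * f y k * b k] (mod p ^ k)"
        using XL k fxy unfolding cong_def by (simp add: mod_mult_left_eq)
      have ak: "a k = (z k * b k) mod p ^ k" using zb by simp
      have c2: "[a k * f (int_point p Y) k = z k * b k * f y k] (mod p ^ k)"
        unfolding cong_def ak using YL k by (simp add: mod_mult_left_eq)
      have eq: "z k * f y k * b k = z k * b k * f y k" by (simp add: ac_simps)
      show "[f (int_point p X) k * b k = a k * f (int_point p Y) k] (mod p ^ k)"
        using cong_trans[OF c1[unfolded eq] cong_sym[OF c2]] .
    qed
    have fin: "f (int_point p Y) \<noteq> padic_zero \<and> frac_dist p (f (int_point p X), f (int_point p Y)) (a, b) < e"
      by (rule finish[OF p1 fyZ fy L YL bnz cg eL])
    have "(f (int_point p X), f (int_point p Y)) \<in> R_set p r f"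
      unfolding R_set_def mem_Collect_eq
      by (rule exI[of _ X], rule exI[of _ Y]) (use X Y fin in simp)
    then show ?thesis using fin q by blast
  next
    case False
    have anz: "a \<noteq> padic_zero" using False by (auto simp: padic_zero_def)
    have ij: "padic_val a < j"
    proof (rule ccontr)
      assume "\<not> padic_val a < j"
      then have "j \<le> padic_val a" by simp
      then show False using False val_below[OF aZ anz, of j] by simp
    qed
    have bi: "b (padic_val a) = 0" using val_below[OF bZ bnz, of "padic_val a"] ij by (simp add: j_def)
    obtain z where zZ: "z \<in> Zp p" and za: "\<forall>n. (z n * a n) mod p ^ n = b n"
      using div_exists[OF pr bZ aZ anz bi] by blast
    have znz: "z \<noteq> padic_zero"
    proof
      assume "z = padic_zero"
      then have "b = padic_zero" using za by (auto simp: padic_zero_def fun_eq_iff)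
      then show False using bnz by simp
    qed
    obtain x y where x: "x \<in> Zp_pow p r" and y: "y \<in> Zp_pow p r" and fy: "f y \<noteq> padic_zero"
      and fxy: "\<forall>n. f x n = (z n * f y n) mod p ^ n" using hyp[OF zZ] by blast
    have fyZ: "f y \<in> Zp p" using fZ y by blast
    have fxZ: "f x \<in> Zp p" using fZ x by blast
    have "f x = padic_mult p z (f y)" using fxy by (simp add: padic_mult_def fun_eq_iff)
    then have fx: "f x \<noteq> padic_zero" using domain[OF pr zZ fyZ znz fy] by simp
    obtain L where L: "padic_val (f x) < L"
      and eL: "real_of_int p powr (real (padic_val (f x)) + real (padic_val b) - real L) < e"
      using chooseL[OF p1 e, of "padic_val (f x)" "padic_val b"] by blast
    obtain X where X: "length X = r" and XL: "\<forall>k \<le> L. f (int_point p X) k = f x k"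
      using approx[OF p1 cont fZ x] by blast
    obtain Y where Y: "length Y = r" and YL: "\<forall>k \<le> L. f (int_point p Y) k = f y k"
      using approx[OF p1 cont fZ y] by blast
    have cg: "\<forall>k \<le> L. [f (int_point p Y) k * b k = a k * f (int_point p X) k] (mod p ^ k)"
    proof (intro allI impI)
      fix k assume k: "k \<le> L"
      have bk: "b k = (z k * a k) mod p ^ k" using za by simp
      have c1: "[f (int_point p Y) k * b k = f y k * (z k * a k)] (mod p ^ k)"
        unfolding cong_def bk using YL k by (simp add: mod_mult_right_eq)
      have c2: "[a k * f (int_point p X) k = a k * (z k * f y k)] (mod p ^ k)"
        using XL k fxy unfolding cong_def by (simp add: mod_mult_right_eq)
      have eq: "f y k * (z k * a k) = a k * (z k * f y k)" by (simp add: ac_simps)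
      show "[f (int_point p Y) k * b k = a k * f (int_point p X) k] (mod p ^ k)"
        using cong_trans[OF c1[unfolded eq] cong_sym[OF c2]] .
    qed
    have fin: "f (int_point p X) \<noteq> padic_zero \<and> frac_dist p (f (int_point p Y), f (int_point p X)) (a, b) < e"
      by (rule finish[OF p1 fxZ fx L XL bnz cg eL])
    have "(f (int_point p Y), f (int_point p X)) \<in> R_set p r f"
      unfolding R_set_def mem_Collect_eq
      by (rule exI[of _ Y], rule exI[of _ X]) (use X Y fin in simp)
    then show ?thesis using fin q by blast
  qed
qed

end
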